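(* Let $c<\delta_1$. There exists $\Delta_1=\Delta_1(c,\delta_1)>0$ such that for every $A\ge1$ there is $\tilde c_2=\tilde c_2(A)>0$ such that, for all $N$ large enough, $$\mathbb P_{L-z}\Big(\inf_{0\le t\le\epsilon}\zeta_t\le1\Big)\le\tilde c_2N^{-\Delta_1}\qquad\text{for all }z\in[0,cL].$$
   Context: Let $W:[0,\infty)\to\mathbb R$ be non-negative, $C^1$, supported in $[0,1]$. For $L>1$ let $\lambda_1=\lambda_1(L)$ be the largest eigenvalue of $\frac12v''+\frac12Wv=\lambda v$ on $(0,L)$, $v(0)=v(L)=0$, with eigenfunction $v_1>0$ on $(0,L)$; $\lambda_1(L)$ increases to $\lambda_{1,\infty}>0$ (assumed). Set $\beta=\sqrt{2\lambda_{1,\infty}}$, $\mu=\sqrt{1+2\lambda_{1,\infty}}$, assume $\mu>3\beta$. For $N\ge1,A\ge1$ let $L=L_{(N,A)}=\frac1{2\beta}\log N+\frac1{\mu-\beta}\log A$. The spine process $\zeta$ on $(0,L)$ solves $d\zeta_t=\frac{v_1'(\zeta_t)}{v_1(\zeta_t)}dt+dB_t$, $B$ standard Brownian motion; $\mathbb P_y$ is its law from $\zeta_0=y$. Fix $\delta_1,\delta_2>0$ with $\frac{1-\delta_1}{\beta}=\frac{2(1+\delta_2)}{\mu-\beta}$ and $\epsilon=\frac{1-\delta_1}{\beta}L$. *)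

theory Defs
  imports "HOL-Probability.Probability"
begin

definition admissible_W :: "(real \<Rightarrow> real) \<Rightarrow> bool" where
  "admissible_W W \<longleftrightarrow>
     (\<forall>x\<ge>0. W x \<ge> 0) \<and> (\<forall>x>1. W x = 0) \<and>
     (\<exists>W'. (\<forall>x\<ge>0. (W has_real_derivative W' x) (at x within {0..})) \<and> continuous_on {0..} W')"

definition dirichlet_eigen :: "(real \<Rightarrow> real) \<Rightarrow> real \<Rightarrow> real \<Rightarrow> (real \<Rightarrow> real) \<Rightarrow> bool" where
  "dirichlet_eigen W L lam v \<longleftrightarrow>
     continuous_on {0..L} v \<and> v 0 = 0 \<and> v L = 0 \<and>
     (\<exists>x\<in>{0<..<L}. v x \<noteq> 0) \<and>
     (\<forall>x\<in>{0<..<L}. v differentiable (at x) \<and> deriv v differentiable (at x) \<and>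
        (1/2) * deriv (deriv v) x + (1/2) * W x * v x = lam * v x)"

definition std_BM :: "'a measure \<Rightarrow> (real \<Rightarrow> 'a \<Rightarrow> real) \<Rightarrow> bool" where
  "std_BM M B \<longleftrightarrow>
     prob_space M \<and>
     (\<forall>t\<ge>0. B t \<in> borel_measurable M) \<and>
     (\<forall>\<omega>\<in>space M. B 0 \<omega> = 0 \<and> continuous_on {0..} (\<lambda>t. B t \<omega>)) \<and>
     (\<forall>s t. 0 \<le> s \<and> s < t \<longrightarrow>
        distributed M lborel (\<lambda>\<omega>. B t \<omega> - B s \<omega>) (\<lambda>x. ennreal (normal_density 0 (sqrt (t - s)) x))) \<and>
     (\<forall>(ts :: nat \<Rightarrow> real) n. 0 \<le> ts 0 \<and> (\<forall>i<n. ts i < ts (Suc i)) \<longrightarrow>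
        prob_space.indep_vars M (\<lambda>_. borel) (\<lambda>i \<omega>. B (ts (Suc i)) \<omega> - B (ts i) \<omega>) {..<n})"

text \<open>zeta is a solution on (0,L) of d zeta = b(zeta) dt + dB started at y, i.e. (additive noise)
  zeta_t = y + int_0^t b(zeta_s) ds + B_t, with continuous paths in (0,L).\<close>
definition diffusion_solution ::
  "'a measure \<Rightarrow> (real \<Rightarrow> 'a \<Rightarrow> real) \<Rightarrow> (real \<Rightarrow> real) \<Rightarrow> real \<Rightarrow> real \<Rightarrow> (real \<Rightarrow> 'a \<Rightarrow> real) \<Rightarrow> bool" where
  "diffusion_solution M B b L y \<zeta> \<longleftrightarrow>
     std_BM M B \<and>
     (\<forall>t\<ge>0. \<zeta> t \<in> borel_measurable M) \<and>
     (\<forall>\<omega>\<in>space M. continuous_on {0..} (\<lambda>t. \<zeta> t \<omega>) \<and>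
        (\<forall>t\<ge>0. \<zeta> t \<omega> \<in> {0<..<L} \<and>
           (\<lambda>s. b (\<zeta> s \<omega>)) integrable_on {0..t} \<and>
           \<zeta> t \<omega> = y + integral {0..t} (\<lambda>s. b (\<zeta> s \<omega>)) + B t \<omega>))"

end

theory Submission
  imports Defs
begin


lemma normal_mgf_pt:
  assumes "s > 0"
  shows "normal_density 0 s y * exp (a*y) = exp (a^2 * s^2 / 2) * normal_density (a * s^2) s y"
proof -
  have "- ((y - 0)^2) / (2 * s^2) + a * y = a^2 * s^2 / 2 + (- ((y - a * s^2)^2) / (2 * s^2))"
    using assms by (simp add: field_simps power2_eq_square)
  then have "exp (- ((y - 0)^2) / (2 * s^2)) * exp (a * y) = exp (a^2 * s^2 / 2) * exp (- ((y - a * s^2)^2) / (2 * s^2))"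
    by (metis exp_add)
  then show ?thesis unfolding normal_density_def by (simp add: ac_simps)
qed

lemma normal_mgf:
  assumes "s > 0"
  shows "(\<integral>\<^sup>+ y. ennreal (normal_density 0 s y) * ennreal (exp (a*y)) \<partial>lborel) = ennreal (exp (a^2 * s^2 / 2))"
proof -
  have "(\<integral>\<^sup>+ y. ennreal (normal_density 0 s y) * ennreal (exp (a*y)) \<partial>lborel)
      = (\<integral>\<^sup>+ y. ennreal (exp (a^2 * s^2 / 2)) * ennreal (normal_density (a * s^2) s y) \<partial>lborel)"
    by (intro nn_integral_cong) (simp add: normal_mgf_pt[OF assms] ennreal_mult[symmetric])
  also have "\<dots> = ennreal (exp (a^2 * s^2 / 2)) * (\<integral>\<^sup>+ y. ennreal (normal_density (a * s^2) s y) \<partial>lborel)"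
    by (rule nn_integral_cmult) simp
  also have "(\<integral>\<^sup>+ y. ennreal (normal_density (a * s^2) s y) \<partial>lborel) = 1"
    using assms by (subst nn_integral_eq_integral) auto
  finally show ?thesis by simp
qed

lemma normal_tail:
  assumes P: "prob_space M" and D: "distributed M lborel X (\<lambda>x. ennreal (normal_density 0 s x))"
    and s: "s > 0" and x: "x \<ge> 0" and sg: "\<sigma> = 1 \<or> \<sigma> = -1"
  shows "measure M {\<omega>\<in>space M. \<sigma> * X \<omega> \<ge> x} \<le> exp (-(x^2)/(2* s^2))"
proof -
  interpret prob_space M by fact
  define \<theta> where "\<theta> = x / s^2"
  define a where "a = \<theta> * \<sigma>"
  have th: "\<theta> \<ge> 0" using x s by (simp add: \<theta>_def)
  have Xm: "X \<in> borel_measurable M" using distributed_measurable[OF D] by simp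
  have Sm: "{\<omega>\<in>space M. \<sigma> * X \<omega> \<ge> x} \<in> sets M" using Xm by measurable
  have "emeasure M {\<omega>\<in>space M. \<sigma> * X \<omega> \<ge> x} = (\<integral>\<^sup>+ \<omega>. indicator {\<omega>\<in>space M. \<sigma> * X \<omega> \<ge> x} \<omega> \<partial>M)"
    using Sm by simp
  also have "\<dots> \<le> (\<integral>\<^sup>+ \<omega>. ennreal (exp (- \<theta> * x)) * ennreal (exp (a * X \<omega>)) \<partial>M)"
  proof (intro nn_integral_mono)
    fix \<omega> assume "\<omega> \<in> space M"
    show "indicator {\<omega>\<in>space M. \<sigma> * X \<omega> \<ge> x} \<omega> \<le> ennreal (exp (- \<theta> * x)) * ennreal (exp (a * X \<omega>))"
    proof (cases "\<sigma> * X \<omega> \<ge> x")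
      case True
      have "0 \<le> - \<theta> * x + a * X \<omega>" using True th unfolding a_def
        by (metis add.commute diff_ge_0_iff_ge mult.assoc mult_left_mono mult_minus_left right_diff_distrib' uminus_add_conv_diff)
      then have "1 \<le> exp (- \<theta> * x) * exp (a * X \<omega>)" by (simp add: exp_add[symmetric])
      then show ?thesis using True \<open>\<omega> \<in> space M\<close> by (simp add: ennreal_mult[symmetric])
    qed simp
  qed
  also have "\<dots> = ennreal (exp (- \<theta> * x)) * (\<integral>\<^sup>+ \<omega>. ennreal (exp (a * X \<omega>)) \<partial>M)"
    by (rule nn_integral_cmult) (use Xm in measurable)
  also have "(\<integral>\<^sup>+ \<omega>. ennreal (exp (a * X \<omega>)) \<partial>M) = (\<integral>\<^sup>+ y. ennreal (exp (a * y)) \<partial>(distr M lborel X))"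
    by (rule nn_integral_distr[symmetric]) (use Xm in auto)
  also have "\<dots> = (\<integral>\<^sup>+ y. ennreal (exp (a * y)) \<partial>(density lborel (\<lambda>x. ennreal (normal_density 0 s x))))"
    using distributed_distr_eq_density[OF D] by simp
  also have "\<dots> = (\<integral>\<^sup>+ y. ennreal (normal_density 0 s y) * ennreal (exp (a*y)) \<partial>lborel)"
    by (rule nn_integral_density) auto
  also have "\<dots> = ennreal (exp (a^2 * s^2 / 2))" by (rule normal_mgf[OF s])
  also have "ennreal (exp (- \<theta> * x)) * ennreal (exp (a^2 * s^2 / 2)) = ennreal (exp (-(x^2)/(2* s^2)))"
  proof -
    have "a^2 = \<theta>^2" using sg by (auto simp: a_def power2_eq_square)
    then have "- \<theta> * x + a^2 * s^2 / 2 = -(x^2)/(2* s^2)" using s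
      by (simp add: \<theta>_def field_simps power2_eq_square)
    then show ?thesis by (simp add: ennreal_mult[symmetric] exp_add[symmetric])
  qed
  finally have "emeasure M {\<omega>\<in>space M. \<sigma> * X \<omega> \<ge> x} \<le> ennreal (exp (-(x^2)/(2* s^2)))" .
  then show ?thesis using Sm by (simp add: emeasure_eq_measure)
qed



lemma levy_discrete:
  fixes D :: "nat \<Rightarrow> 'a \<Rightarrow> real"
  assumes P: "prob_space M" and ind: "prob_space.indep_vars M (\<lambda>_. borel) D {..<n}"
    and y: "y \<ge> 0"
    and half: "\<And>k. k < n \<Longrightarrow> measure M {\<omega>\<in>space M. -y \<le> (\<Sum>i\<in>{k..<n}. D i \<omega>)} \<ge> 1/2"
  shows "measure M {\<omega>\<in>space M. \<exists>j\<le>n. x \<le> (\<Sum>i<j. D i \<omega>)}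
           \<le> 2 * measure M {\<omega>\<in>space M. x - y \<le> (\<Sum>i<n. D i \<omega>)}"
proof -
  interpret prob_space M by fact
  have Dm: "D i \<in> borel_measurable M" if "i < n" for i
    using ind that unfolding indep_vars_def by auto
  define S where "S j \<omega> = (\<Sum>i<j. D i \<omega>)" for j \<omega>
  have Sm: "S j \<in> borel_measurable M" if "j \<le> n" for j
    unfolding S_def using that Dm by (intro borel_measurable_sum) auto
  define A where "A k = {\<omega>\<in>space M. x \<le> S k \<omega> \<and> (\<forall>j<k. S j \<omega> < x)}" for k
  define C where "C k = {\<omega>\<in>space M. -y \<le> (\<Sum>i\<in>{k..<n}. D i \<omega>)}" for k
  have Am: "A k \<in> sets M" if "k \<le> n" for k
  proof -
    have "A k = {\<omega>\<in>space M. x \<le> S k \<omega>} \<inter> {\<omega>\<in>space M. \<forall>j\<in>{..<k}. S j \<omega> < x}"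
      unfolding A_def by auto
    also have "\<dots> \<in> sets M"
      using Sm that by (intro sets.Int sets.sets_Collect_finite_All) (auto simp del: lessThan_iff)
    finally show ?thesis .
  qed
  have Cm: "C k \<in> sets M" for k
    unfolding C_def using Dm by measurable
  have E: "{\<omega>\<in>space M. \<exists>j\<le>n. x \<le> (\<Sum>i<j. D i \<omega>)} = (\<Union>k\<in>{..n}. A k)"
  proof
    show "{\<omega>\<in>space M. \<exists>j\<le>n. x \<le> (\<Sum>i<j. D i \<omega>)} \<subseteq> (\<Union>k\<in>{..n}. A k)"
    proof
      fix \<omega> assume "\<omega> \<in> {\<omega>\<in>space M. \<exists>j\<le>n. x \<le> (\<Sum>i<j. D i \<omega>)}"
      then have w: "\<omega> \<in> space M" and "\<exists>j. j \<le> n \<and> x \<le> S j \<omega>" by (auto simp: S_def)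
      then obtain j where j: "j \<le> n \<and> x \<le> S j \<omega>" "\<forall>m<j. \<not> (m \<le> n \<and> x \<le> S m \<omega>)"
        using exists_least_iff[of "\<lambda>j. j \<le> n \<and> x \<le> S j \<omega>"] by blast
      then have "\<omega> \<in> A j" using w unfolding A_def by auto
      then show "\<omega> \<in> (\<Union>k\<in>{..n}. A k)" using j by auto
    qed
  qed (auto simp: A_def S_def)
  have disj: "disjoint_family_on A {..n}"
    unfolding disjoint_family_on_def
  proof (intro ballI impI)
    fix k l assume "k \<in> {..n}" "l \<in> {..n}" "k \<noteq> l"
    then consider "k < l" | "l < k" by linarith
    then show "A k \<inter> A l = {}"
      by cases (auto simp: A_def)
  qed
  have "measure M {\<omega>\<in>space M. \<exists>j\<le>n. x \<le> (\<Sum>i<j. D i \<omega>)} = (\<Sum>k\<in>{..n}. measure M (A k))"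
    unfolding E using Am disj by (intro finite_measure_finite_Union) auto
  also have "\<dots> \<le> (\<Sum>k\<in>{..n}. 2 * measure M (A k \<inter> C k))"
  proof (intro sum_mono)
    fix k assume k: "k \<in> {..n}"
    show "measure M (A k) \<le> 2 * measure M (A k \<inter> C k)"
    proof (cases "k = n")
      case True
      then have "A k \<inter> C k = A k" using y by (auto simp: C_def A_def)
      then show ?thesis by simp
    next
      case False
      then have kn: "k < n" using k by auto
      let ?Ma = "PiM {..<k} (\<lambda>_. borel :: real measure)"
      let ?Mb = "PiM {k..<n} (\<lambda>_. borel :: real measure)"
      let ?XA = "\<lambda>\<omega>. restrict (\<lambda>i. D i \<omega>) {..<k}"
      let ?XB = "\<lambda>\<omega>. restrict (\<lambda>i. D i \<omega>) {k..<n}"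
      have iv: "indep_var ?Ma ?XA ?Mb ?XB"
        using kn by (intro indep_var_restrict[OF ind]) auto
      define Xa where "Xa = {d\<in>space ?Ma. x \<le> (\<Sum>i<k. d i) \<and> (\<forall>j<k. (\<Sum>i<j. d i) < x)}"
      define Xb where "Xb = {d\<in>space ?Mb. -y \<le> (\<Sum>i\<in>{k..<n}. d i)}"
      have summ: "(\<lambda>d. \<Sum>i<j. d i) \<in> borel_measurable ?Ma" if "j \<le> k" for j
        using that by (intro borel_measurable_sum measurable_component_singleton) auto
      have Xam: "Xa \<in> sets ?Ma"
      proof -
        have "Xa = {d\<in>space ?Ma. x \<le> (\<Sum>i<k. d i)} \<inter> {d\<in>space ?Ma. \<forall>j\<in>{..<k}. (\<Sum>i<j. d i) < x}"
          unfolding Xa_def by auto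
        also have "\<dots> \<in> sets ?Ma"
          using summ by (intro sets.Int sets.sets_Collect_finite_All) (auto simp del: lessThan_iff)
        finally show ?thesis .
      qed
      have Xbm: "Xb \<in> sets ?Mb"
      proof -
        have "(\<lambda>d. \<Sum>i\<in>{k..<n}. d i) \<in> borel_measurable ?Mb"
          by (intro borel_measurable_sum measurable_component_singleton) auto
        then show ?thesis unfolding Xb_def by measurable
      qed
      have pa: "?XA -` Xa \<inter> space M = A k"
        unfolding Xa_def A_def S_def by (auto simp: space_PiM PiE_def)
      have pb: "?XB -` Xb \<inter> space M = C k"
        unfolding Xb_def C_def by (auto simp: space_PiM PiE_def)
      have pab: "(\<lambda>\<omega>. (?XA \<omega>, ?XB \<omega>)) -` (Xa \<times> Xb) \<inter> space M = A k \<inter> C k"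
        using pa pb by auto
      have "measure M (A k \<inter> C k) = measure M (A k) * measure M (C k)"
        using indep_varD[OF iv Xam Xbm] unfolding pab pa pb .
      moreover have "measure M (A k) * (1/2) \<le> measure M (A k) * measure M (C k)"
        using half[OF kn] unfolding C_def by (intro mult_left_mono) auto
      ultimately show ?thesis by linarith
    qed
  qed
  also have "\<dots> = 2 * measure M (\<Union>k\<in>{..n}. A k \<inter> C k)"
  proof -
    have "disjoint_family_on (\<lambda>k. A k \<inter> C k) {..n}"
      using disj unfolding disjoint_family_on_def by blast
    then show ?thesis
      using Am Cm by (subst finite_measure_finite_Union) (auto simp: sum_distrib_left)
  qed
  also have "\<dots> \<le> 2 * measure M {\<omega>\<in>space M. x - y \<le> (\<Sum>i<n. D i \<omega>)}"
  proof -
    have "(\<Union>k\<in>{..n}. A k \<inter> C k) \<subseteq> {\<omega>\<in>space M. x - y \<le> (\<Sum>i<n. D i \<omega>)}"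
    proof
      fix \<omega> assume "\<omega> \<in> (\<Union>k\<in>{..n}. A k \<inter> C k)"
      then obtain k where k: "k \<in> {..n}" and a: "\<omega> \<in> A k" and c: "\<omega> \<in> C k" by blast
      have "(\<Sum>i<n. D i \<omega>) = (\<Sum>i<k. D i \<omega>) + (\<Sum>i\<in>{k..<n}. D i \<omega>)"
        using k by (simp add: lessThan_atLeast0 sum.atLeastLessThan_concat)
      then show "\<omega> \<in> {\<omega>\<in>space M. x - y \<le> (\<Sum>i<n. D i \<omega>)}" using a c by (auto simp: A_def C_def S_def)
    qed
    moreover have "{\<omega>\<in>space M. x - y \<le> (\<Sum>i<n. D i \<omega>)} \<in> sets M"
    proof -
      have "(\<lambda>\<omega>. \<Sum>i<n. D i \<omega>) \<in> borel_measurable M" using Sm[of n] by (simp add: S_def[abs_def])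
      then show ?thesis by measurable
    qed
    ultimately show ?thesis by (auto intro!: finite_measure_mono)
  qed
  finally show ?thesis .
qed



lemma exp_m1_le_half: "exp (-1::real) \<le> 1/2"
proof -
  have "2 \<le> exp (1::real)" using exp_ge_add_one_self[of 1] by simp
  then show ?thesis by (simp add: exp_minus field_simps)
qed

lemma std_BM_prob: "std_BM M B \<Longrightarrow> prob_space M"
  unfolding std_BM_def by blast
lemma std_BM_dist: "std_BM M B \<Longrightarrow> 0 \<le> s \<Longrightarrow> s < t \<Longrightarrow>
   distributed M lborel (\<lambda>\<omega>. B t \<omega> - B s \<omega>) (\<lambda>x. ennreal (normal_density 0 (sqrt (t - s)) x))"
  unfolding std_BM_def by blast
lemma std_BM_indep: "std_BM M B \<Longrightarrow> 0 \<le> ts 0 \<Longrightarrow> (\<forall>i<n. ts i < ts (Suc i)) \<Longrightarrow>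
   prob_space.indep_vars M (\<lambda>_. borel) (\<lambda>i \<omega>. B (ts (Suc i)) \<omega> - B (ts i) \<omega>) {..<n}"
  unfolding std_BM_def by blast
lemma std_BM_B0: "std_BM M B \<Longrightarrow> \<omega> \<in> space M \<Longrightarrow> B 0 \<omega> = 0"
  unfolding std_BM_def by blast
lemma std_BM_cont: "std_BM M B \<Longrightarrow> \<omega> \<in> space M \<Longrightarrow> continuous_on {0..} (\<lambda>t. B t \<omega>)"
  unfolding std_BM_def by blast
lemma std_BM_meas: "std_BM M B \<Longrightarrow> 0 \<le> t \<Longrightarrow> B t \<in> borel_measurable M"
  unfolding std_BM_def by blast

lemma bm_grid_max:
  assumes BM: "std_BM M B" and T: "T > 0" and sg: "\<sigma> = 1 \<or> \<sigma> = -1"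
    and x: "x \<ge> sqrt (2*T)" and n: "n > 0"
  shows "measure M {\<omega>\<in>space M. \<exists>j\<le>n. x \<le> \<sigma> * B (real j * T / real n) \<omega>}
           \<le> 2 * exp (-((x - sqrt (2*T))^2)/(2*T))"
proof -
  have P: "prob_space M" using BM by (rule std_BM_prob)
  interpret prob_space M by fact
  define ts where "ts i = real i * T / real n" for i
  have ts0: "ts 0 = 0" by (simp add: ts_def)
  have tsn: "ts n = T" using n by (simp add: ts_def)
  have tsmono: "ts i < ts j" if "i < j" for i j
    using that T n by (simp add: ts_def divide_strict_right_mono mult_strict_right_mono)
  have tsnn: "ts i \<ge> 0" for i using T by (simp add: ts_def)
  have tsle: "ts k \<le> T" if "k \<le> n" for k
    using tsmono[of k n] that tsn by (cases "k = n") auto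
  define y where "y = sqrt (2*T)"
  have y0: "y \<ge> 0" using T by (simp add: y_def)
  have y2: "y^2 = 2*T" using T by (simp add: y_def)
  define D where "D i \<omega> = \<sigma> * (B (ts (Suc i)) \<omega> - B (ts i) \<omega>)" for i \<omega>
  have ind0: "indep_vars (\<lambda>_. borel) (\<lambda>i \<omega>. B (ts (Suc i)) \<omega> - B (ts i) \<omega>) {..<n}"
    using tsmono ts0 by (intro std_BM_indep[OF BM]) auto
  have ind: "indep_vars (\<lambda>_. borel) D {..<n}"
    unfolding D_def[abs_def]
    by (rule indep_vars_compose2[OF ind0, where Y="\<lambda>i z. \<sigma> * z"]) auto
  have B0: "B 0 \<omega> = 0" if "\<omega> \<in> space M" for \<omega> using std_BM_B0[OF BM that] .
  have tele: "(\<Sum>i<j. D i \<omega>) = \<sigma> * B (ts j) \<omega>" if "\<omega> \<in> space M" for j \<omega>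
  proof -
    have "(\<Sum>i<j. D i \<omega>) = \<sigma> * (\<Sum>i<j. B (ts (Suc i)) \<omega> - B (ts i) \<omega>)"
      by (simp add: D_def sum_distrib_left)
    also have "\<dots> = \<sigma> * (B (ts j) \<omega> - B (ts 0) \<omega>)"
      by (subst sum_lessThan_telescope) simp
    finally show ?thesis using B0[OF that] ts0 by simp
  qed
  have tele2: "(\<Sum>i\<in>{k..<n}. D i \<omega>) = \<sigma> * (B T \<omega> - B (ts k) \<omega>)" if "\<omega> \<in> space M" "k \<le> n" for k \<omega>
  proof -
    have "(\<Sum>i<n. D i \<omega>) = (\<Sum>i<k. D i \<omega>) + (\<Sum>i\<in>{k..<n}. D i \<omega>)"
      using that by (simp add: lessThan_atLeast0 sum.atLeastLessThan_concat)
    then show ?thesis using tele[OF that(1), of n] tele[OF that(1), of k] tsn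
      by (simp add: algebra_simps)
  qed
  have half: "measure M {\<omega>\<in>space M. -y \<le> (\<Sum>i\<in>{k..<n}. D i \<omega>)} \<ge> 1/2" if k: "k < n" for k
  proof -
    have Dk: "distributed M lborel (\<lambda>\<omega>. B T \<omega> - B (ts k) \<omega>) (\<lambda>x. ennreal (normal_density 0 (sqrt (T - ts k)) x))"
      using tsmono[OF k] tsn tsnn by (intro std_BM_dist[OF BM]) auto
    have Xm: "(\<lambda>\<omega>. B T \<omega> - B (ts k) \<omega>) \<in> borel_measurable M"
      using distributed_measurable[OF Dk] by simp
    have s: "sqrt (T - ts k) > 0" using tsmono[OF k] tsn by simp
    have "measure M {\<omega>\<in>space M. (-\<sigma>) * (B T \<omega> - B (ts k) \<omega>) \<ge> y} \<le> exp (-(y^2)/(2*(sqrt (T - ts k))^2))"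
      by (rule normal_tail[OF P Dk s y0]) (use sg in auto)
    also have "\<dots> \<le> exp (-1)"
    proof -
      have "(sqrt (T - ts k))^2 = T - ts k" using s by simp
      moreover have "T - ts k \<le> T" using tsnn[of k] by simp
      moreover have "T - ts k > 0" using s by simp
      ultimately have "-(y^2)/(2*(sqrt (T - ts k))^2) \<le> -1"
        using y2 T by (simp add: field_simps)
      then show ?thesis by simp
    qed
    also have "\<dots> \<le> 1/2" by (rule exp_m1_le_half)
    finally have bad: "measure M {\<omega>\<in>space M. (-\<sigma>) * (B T \<omega> - B (ts k) \<omega>) \<ge> y} \<le> 1/2" .
    have S: "{\<omega>\<in>space M. -y \<le> \<sigma> * (B T \<omega> - B (ts k) \<omega>)} \<in> sets M" using Xm by measurable
    have "space M - {\<omega>\<in>space M. -y \<le> \<sigma> * (B T \<omega> - B (ts k) \<omega>)}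
           \<subseteq> {\<omega>\<in>space M. (-\<sigma>) * (B T \<omega> - B (ts k) \<omega>) \<ge> y}" by auto
    then have "measure M (space M - {\<omega>\<in>space M. -y \<le> \<sigma> * (B T \<omega> - B (ts k) \<omega>)}) \<le> 1/2"
    proof -
      have "{\<omega>\<in>space M. (-\<sigma>) * (B T \<omega> - B (ts k) \<omega>) \<ge> y} \<in> sets M" using Xm by measurable
      then show ?thesis using bad \<open>_ \<subseteq> _\<close> by (meson finite_measure_mono order_trans)
    qed
    then have "measure M {\<omega>\<in>space M. -y \<le> \<sigma> * (B T \<omega> - B (ts k) \<omega>)} \<ge> 1/2"
      using prob_compl[OF S] by simp
    moreover have "{\<omega>\<in>space M. -y \<le> (\<Sum>i\<in>{k..<n}. D i \<omega>)} = {\<omega>\<in>space M. -y \<le> \<sigma> * (B T \<omega> - B (ts k) \<omega>)}"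
      using tele2 k by auto
    ultimately show ?thesis by simp
  qed
  have "measure M {\<omega>\<in>space M. \<exists>j\<le>n. x \<le> \<sigma> * B (real j * T / real n) \<omega>}
      = measure M {\<omega>\<in>space M. \<exists>j\<le>n. x \<le> (\<Sum>i<j. D i \<omega>)}"
    using tele by (intro arg_cong[where f="measure M"]) (auto simp: ts_def)
  also have "\<dots> \<le> 2 * measure M {\<omega>\<in>space M. x - y \<le> (\<Sum>i<n. D i \<omega>)}"
    by (rule levy_discrete[OF P ind y0 half])
  also have "{\<omega>\<in>space M. x - y \<le> (\<Sum>i<n. D i \<omega>)} = {\<omega>\<in>space M. \<sigma> * (B T \<omega> - B 0 \<omega>) \<ge> x - y}"
    using tele tsn B0 by auto
  also have "measure M \<dots> \<le> exp (-((x - y)^2)/(2*(sqrt T)^2))"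
  proof (rule normal_tail[OF P _ _ _ sg])
    show "distributed M lborel (\<lambda>\<omega>. B T \<omega> - B 0 \<omega>) (\<lambda>x. ennreal (normal_density 0 (sqrt T) x))"
      using std_BM_dist[OF BM order_refl T] by simp
  qed (use T x in \<open>auto simp: y_def\<close>)
  finally show ?thesis using T by (simp add: y_def)
qed



lemma bm_sup_one:
  assumes BM: "std_BM M B" and T: "T > 0" and sg: "\<sigma> = 1 \<or> \<sigma> = -1"
    and x: "x \<ge> sqrt (2*T) + 1"
  shows "\<exists>U\<in>sets M. {\<omega>\<in>space M. \<exists>t\<in>{0..T}. x \<le> \<sigma> * B t \<omega>} \<subseteq> U \<and>
           measure M U \<le> 2 * exp (-((x - 1 - sqrt (2*T))^2)/(2*T))"
proof -
  have P: "prob_space M" using BM by (rule std_BM_prob)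
  interpret prob_space M by fact
  define F where "F m = {\<omega>\<in>space M. \<exists>j\<in>{..(2::nat)^m}. x - 1 \<le> \<sigma> * B (real j * T / real ((2::nat)^m)) \<omega>}" for m
  have Fm: "F m \<in> sets M" for m
    unfolding F_def
  proof (intro sets.sets_Collect_finite_Ex)
    fix j assume "j \<in> {..(2::nat)^m}"
    have "B (real j * T / real ((2::nat)^m)) \<in> borel_measurable M"
      using T by (intro std_BM_meas[OF BM]) auto
    then show "{\<omega> \<in> space M. x - 1 \<le> \<sigma> * B (real j * T / real ((2::nat)^m)) \<omega>} \<in> sets M"
      by measurable
  qed auto
  have inc: "incseq F"
  proof (rule incseq_SucI)
    fix m show "F m \<subseteq> F (Suc m)"
    proof
      fix \<omega> assume "\<omega> \<in> F m"
      then obtain j where w: "\<omega> \<in> space M" and j: "j \<le> 2^m" and b: "x - 1 \<le> \<sigma> * B (real j * T / real ((2::nat)^m)) \<omega>"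
        unfolding F_def by auto
      have "real (2*j) * T / real ((2::nat)^Suc m) = real j * T / real ((2::nat)^m)" by simp
      moreover have "2*j \<le> 2^Suc m" using j by simp
      ultimately show "\<omega> \<in> F (Suc m)" unfolding F_def using w b
        by (intro CollectI conjI bexI[of _ "2*j"]) auto
    qed
  qed
  define U where "U = (\<Union>m. F m)"
  have Um: "U \<in> sets M" unfolding U_def using Fm by auto
  have bnd: "measure M (F m) \<le> 2 * exp (-((x - 1 - sqrt (2*T))^2)/(2*T))" for m
  proof -
    have "measure M (F m) = measure M {\<omega>\<in>space M. \<exists>j\<le>2^m. x - 1 \<le> \<sigma> * B (real j * T / real ((2::nat)^m)) \<omega>}"
      unfolding F_def by (intro arg_cong[where f="measure M"]) auto
    also have "\<dots> \<le> 2 * exp (-((x - 1 - sqrt (2*T))^2)/(2*T))"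
      by (rule bm_grid_max[OF BM T sg]) (use x in auto)
    finally show ?thesis .
  qed
  have "measure M U \<le> 2 * exp (-((x - 1 - sqrt (2*T))^2)/(2*T))"
    unfolding U_def
    by (rule LIMSEQ_le_const2[OF finite_Lim_measure_incseq]) (use Fm inc bnd in auto)
  moreover have "{\<omega>\<in>space M. \<exists>t\<in>{0..T}. x \<le> \<sigma> * B t \<omega>} \<subseteq> U"
  proof
    fix \<omega> assume "\<omega> \<in> {\<omega>\<in>space M. \<exists>t\<in>{0..T}. x \<le> \<sigma> * B t \<omega>}"
    then obtain t where w: "\<omega> \<in> space M" and t: "0 \<le> t" "t \<le> T" and xt: "x \<le> \<sigma> * B t \<omega>" by auto
    have "continuous_on {0..} (\<lambda>t. B t \<omega>)" by (rule std_BM_cont[OF BM w])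
    then obtain d where d: "d > 0" and dd: "\<And>s. s \<in> {0..} \<Longrightarrow> dist s t < d \<Longrightarrow> dist (B s \<omega>) (B t \<omega>) < 1"
      unfolding continuous_on_iff using t by (meson atLeast_iff zero_less_one)
    obtain m where m: "T / d < 2^m" using real_arch_pow[of 2 "T/d"] by auto
    define p where "p = (2::real)^m"
    have p0: "p > 0" by (simp add: p_def)
    have Tp: "T / p < d" using m d p0 unfolding p_def[symmetric] by (simp add: field_simps)
    define j where "j = nat \<lfloor>t * p / T\<rfloor>"
    have q0: "t * p / T \<ge> 0" using t T p0 by simp
    have j1: "real j \<le> t * p / T" unfolding j_def using q0 by simp
    have j2: "t * p / T < real j + 1" unfolding j_def using q0 by linarith
    have "t * p / T \<le> p" using t T p0 by (simp add: field_simps)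
    then have "real j \<le> p" using j1 by linarith
    then have jle: "j \<le> 2^m" unfolding p_def
      by (metis of_nat_le_iff of_nat_numeral of_nat_power)
    define s where "s = real j * T / p"
    have s0: "s \<ge> 0" using T p0 by (simp add: s_def)
    have st: "s \<le> t" using j1 T p0 by (simp add: s_def field_simps)
    have st2: "t - s < T / p"
    proof -
      have a: "t * p < (real j + 1) * T" using j2 T by (simp add: divide_less_eq)
      have "(t - s) * p = t*p - real j * T" using p0 by (simp add: s_def field_simps)
      then have "(t - s) * p < T" using a by (simp add: algebra_simps)
      then show ?thesis using p0 by (simp add: pos_less_divide_eq)
    qed
    have "dist s t < d" using st st2 Tp by (simp add: dist_real_def)
    then have "dist (B s \<omega>) (B t \<omega>) < 1" using dd s0 by auto
    then have "x - 1 \<le> \<sigma> * B s \<omega>" using xt sg by (auto simp: dist_real_def)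
    moreover have "s = real j * T / real ((2::nat)^m)" by (simp add: s_def p_def)
    ultimately have "\<omega> \<in> F m" unfolding F_def using w jle by auto
    then show "\<omega> \<in> U" unfolding U_def by auto
  qed
  ultimately show ?thesis using Um by blast
qed

lemma bm_osc:
  assumes BM: "std_BM M B" and T: "T > 0" and G: "G/2 \<ge> sqrt (2*T) + 1"
  shows "\<exists>U\<in>sets M. {\<omega>\<in>space M. \<exists>a\<in>{0..T}. \<exists>b\<in>{0..T}. B b \<omega> - B a \<omega> \<le> -G} \<subseteq> U \<and>
           measure M U \<le> 4 * exp (-((G/2 - 1 - sqrt (2*T))^2)/(2*T))"
proof -
  have P: "prob_space M" using BM by (rule std_BM_prob)
  interpret prob_space M by fact
  obtain U1 where U1: "U1 \<in> sets M" "{\<omega>\<in>space M. \<exists>t\<in>{0..T}. G/2 \<le> 1 * B t \<omega>} \<subseteq> U1"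
     "measure M U1 \<le> 2 * exp (-((G/2 - 1 - sqrt (2*T))^2)/(2*T))"
    using bm_sup_one[OF BM T _ G, of 1] by auto
  obtain U2 where U2: "U2 \<in> sets M" "{\<omega>\<in>space M. \<exists>t\<in>{0..T}. G/2 \<le> (-1) * B t \<omega>} \<subseteq> U2"
     "measure M U2 \<le> 2 * exp (-((G/2 - 1 - sqrt (2*T))^2)/(2*T))"
    using bm_sup_one[OF BM T _ G, of "-1"] by auto
  have "{\<omega>\<in>space M. \<exists>a\<in>{0..T}. \<exists>b\<in>{0..T}. B b \<omega> - B a \<omega> \<le> -G} \<subseteq> U1 \<union> U2"
  proof
    fix \<omega> assume "\<omega> \<in> {\<omega>\<in>space M. \<exists>a\<in>{0..T}. \<exists>b\<in>{0..T}. B b \<omega> - B a \<omega> \<le> -G}"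
    then obtain a b where w: "\<omega> \<in> space M" and ab: "a \<in> {0..T}" "b \<in> {0..T}" and o: "B b \<omega> - B a \<omega> \<le> -G" by auto
    show "\<omega> \<in> U1 \<union> U2"
    proof (cases "G/2 \<le> B a \<omega>")
      case True
      then have "\<omega> \<in> {\<omega>\<in>space M. \<exists>t\<in>{0..T}. G/2 \<le> 1 * B t \<omega>}" using w ab by auto
      then show ?thesis using U1(2) by blast
    next
      case False
      then have "G/2 \<le> (-1) * B b \<omega>" using o by linarith
      then have "\<omega> \<in> {\<omega>\<in>space M. \<exists>t\<in>{0..T}. G/2 \<le> (-1) * B t \<omega>}" using w ab by auto
      then show ?thesis using U2(2) by blast
    qed
  qed
  moreover have "measure M (U1 \<union> U2) \<le> 4 * exp (-((G/2 - 1 - sqrt (2*T))^2)/(2*T))"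
    using measure_Un_le[OF U1(1) U2(1)] U1(3) U2(3) by linarith
  ultimately show ?thesis using U1(1) U2(1) by blast
qed



lemma eig_facts:
  assumes W: "admissible_W W" and eig: "dirichlet_eigen W L lam v"
    and y: "1 < y" "y < L"
  shows "(v has_real_derivative deriv v y) (at y)"
    and "(deriv v has_real_derivative deriv (deriv v) y) (at y)"
    and "deriv (deriv v) y = 2 * lam * v y"
proof -
  have y0: "y \<in> {0<..<L}" using y by auto
  have dd: "v differentiable (at y) \<and> deriv v differentiable (at y) \<and>
        (1/2) * deriv (deriv v) y + (1/2) * W y * v y = lam * v y"
    using eig y0 unfolding dirichlet_eigen_def by blast
  show "(v has_real_derivative deriv v y) (at y)"
    using dd DERIV_deriv_iff_real_differentiable by blast
  show "(deriv v has_real_derivative deriv (deriv v) y) (at y)"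
    using dd DERIV_deriv_iff_real_differentiable by blast
  have "W y = 0" using W y unfolding admissible_W_def by auto
  then show "deriv (deriv v) y = 2 * lam * v y" using dd by simp
qed

lemma drift_bound_pos:
  fixes k :: real
  assumes W: "admissible_W W" and eig: "dirichlet_eigen W L lam v"
    and vpos: "\<forall>x\<in>{0<..<L}. v x > 0"
    and lam0: "lam \<ge> 0" and lamk: "2 * lam \<le> k^2" and k: "k > 0"
    and x: "1 < x" "x < L"
  shows "deriv v x * (exp (k*(L-x)) - exp (-(k*(L-x)))) + k * (exp (k*(L-x)) + exp (-(k*(L-x)))) * v x \<ge> 0"
proof -
  define \<phi> where "\<phi> y = exp (k*(L-y)) - exp (-(k*(L-y)))" for y
  define \<psi> where "\<psi> y = exp (k*(L-y)) + exp (-(k*(L-y)))" for y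
  define h where "h y = deriv v y * \<phi> y + k * \<psi> y * v y" for y
  have \<phi>pos: "\<phi> y > 0" if "y < L" for y
    using that k by (simp add: \<phi>_def)
  have dphi: "(\<phi> has_real_derivative (- k * \<psi> y)) (at y)" for y
    unfolding \<phi>_def \<psi>_def
    by (auto intro!: derivative_eq_intros simp: algebra_simps)
  have dpsi: "(\<psi> has_real_derivative (- k * \<phi> y)) (at y)" for y
    unfolding \<phi>_def \<psi>_def
    by (auto intro!: derivative_eq_intros simp: algebra_simps)
  have dh: "(h has_real_derivative ((2*lam - k^2) * v y * \<phi> y)) (at y)" if "1 < y" "y < L" for y
  proof -
    note f = eig_facts[OF W eig that]
    have A: "((\<lambda>z. deriv v z * \<phi> z) has_real_derivative (deriv (deriv v) y * \<phi> y + (- k * \<psi> y) * deriv v y)) (at y)"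
      by (rule DERIV_mult[OF f(2) dphi])
    have B: "((\<lambda>z. k * \<psi> z * v z) has_real_derivative (k * (- k * \<phi> y) * v y + deriv v y * (k * \<psi> y))) (at y)"
      by (rule DERIV_mult[OF DERIV_cmult[OF dpsi] f(1)])
    have "(h has_real_derivative ((deriv (deriv v) y * \<phi> y + (- k * \<psi> y) * deriv v y) + (k * (- k * \<phi> y) * v y + deriv v y * (k * \<psi> y)))) (at y)"
      unfolding h_def[abs_def] by (rule DERIV_add[OF A B])
    then show ?thesis using f(3) by (simp add: algebra_simps power2_eq_square)
  qed
  have hdec: "h y \<le> h x" if "x \<le> y" "y < L" for y
  proof (rule DERIV_nonpos_imp_nonincreasing[OF that(1)])
    fix z assume z: "x \<le> z" "z \<le> y"
    have "v z > 0" using vpos z x that by auto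
    moreover have "\<phi> z > 0" using \<phi>pos z that by auto
    moreover have "2*lam - k^2 \<le> 0" using lamk by simp
    ultimately have "(2*lam - k^2) * v z * \<phi> z \<le> 0"
      by (simp add: mult_nonpos_nonneg)
    then show "\<exists>d. (h has_real_derivative d) (at z) \<and> d \<le> 0"
      using dh[of z] z x that by auto
  qed
  have vdinc: "deriv v x \<le> deriv v y" if "x \<le> y" "y < L" for y
  proof (rule DERIV_nonneg_imp_nondecreasing[OF that(1)])
    fix z assume z: "x \<le> z" "z \<le> y"
    have "v z > 0" using vpos z x that by auto
    then have "2 * lam * v z \<ge> 0" using lam0 by simp
    then show "\<exists>d. (deriv v has_real_derivative d) (at z) \<and> d \<ge> 0"
      using eig_facts[OF W eig, of z] z x that by auto
  qed
  have ev: "eventually (\<lambda>y. deriv v x * \<phi> y + k * \<psi> y * v y \<le> h x) (at_left L)"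
    using eventually_at_left_real[OF x(2)]
  proof (rule eventually_mono)
    fix y assume y: "y \<in> {x<..<L}"
    have "deriv v x * \<phi> y \<le> deriv v y * \<phi> y"
      using vdinc[of y] y \<phi>pos[of y] by (intro mult_right_mono) auto
    then have "deriv v x * \<phi> y + k * \<psi> y * v y \<le> h y" unfolding h_def by simp
    also have "h y \<le> h x" using hdec[of y] y by auto
    finally show "deriv v x * \<phi> y + k * \<psi> y * v y \<le> h x" .
  qed
  have L0: "0 < L" using x by simp
  have vc: "continuous_on {0..L} v" using eig unfolding dirichlet_eigen_def by blast
  have vL: "v L = 0" using eig unfolding dirichlet_eigen_def by blast
  have vt: "(v \<longlongrightarrow> 0) (at_left L)"
    using vc L0 vL unfolding continuous_on_def by (metis at_within_Icc_at_left atLeastAtMost_iff order_refl less_imp_le)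
  have \<phi>t: "(\<phi> \<longlongrightarrow> \<phi> L) (at_left L)"
    unfolding \<phi>_def by (intro tendsto_intros)
  have \<psi>t: "(\<psi> \<longlongrightarrow> \<psi> L) (at_left L)"
    unfolding \<psi>_def by (intro tendsto_intros)
  have "((\<lambda>y. deriv v x * \<phi> y + k * \<psi> y * v y) \<longlongrightarrow> deriv v x * \<phi> L + k * \<psi> L * 0) (at_left L)"
    by (intro tendsto_intros \<phi>t \<psi>t vt)
  then have "deriv v x * \<phi> L + k * \<psi> L * 0 \<le> h x"
    by (rule tendsto_upperbound[OF _ ev]) simp
  moreover have "\<phi> L = 0" by (simp add: \<phi>_def)
  ultimately have "0 \<le> h x" by simp
  then show ?thesis unfolding h_def \<phi>_def \<psi>_def .
qed

lemma drift_bound_neg: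
  assumes W: "admissible_W W" and eig: "dirichlet_eigen W L lam v"
    and vpos: "\<forall>x\<in>{0<..<L}. v x > 0"
    and lam0: "lam \<le> 0"
    and x: "1 < x" "x < L"
  shows "deriv v x * (L - x) + v x \<ge> 0"
proof -
  have vddec: "deriv v z \<le> deriv v x" if "x \<le> z" "z < L" for z
  proof (rule DERIV_nonpos_imp_nonincreasing[OF that(1)])
    fix w assume w: "x \<le> w" "w \<le> z"
    have "v w > 0" using vpos w x that by auto
    then have "2 * lam * v w \<le> 0" using lam0 by (simp add: mult_nonpos_nonneg)
    then show "\<exists>d. (deriv v has_real_derivative d) (at w) \<and> d \<le> 0"
      using eig_facts[OF W eig, of w] w x that by auto
  qed
  have ev: "eventually (\<lambda>y. v y - v x \<le> deriv v x * (y - x)) (at_left L)"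
    using eventually_at_left_real[OF x(2)]
  proof (rule eventually_mono)
    fix y assume y: "y \<in> {x<..<L}"
    then have xy: "x < y" by simp
    have "\<And>t. x \<le> t \<Longrightarrow> t \<le> y \<Longrightarrow> (v has_real_derivative deriv v t) (at t)"
      using eig_facts(1)[OF W eig] x y by auto
    from MVT2[OF xy this] obtain z where z: "x < z" "z < y" "v y - v x = (y - x) * deriv v z" by auto
    have "deriv v z \<le> deriv v x" using vddec[of z] z y by auto
    then have "(y - x) * deriv v z \<le> (y - x) * deriv v x" using xy by (intro mult_left_mono) auto
    then show "v y - v x \<le> deriv v x * (y - x)" using z(3) by (simp add: mult.commute)
  qed
  have L0: "0 < L" using x by simp
  have vc: "continuous_on {0..L} v" using eig unfolding dirichlet_eigen_def by blast
  have vL: "v L = 0" using eig unfolding dirichlet_eigen_def by blast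
  have vt: "(v \<longlongrightarrow> 0) (at_left L)"
    using vc L0 vL unfolding continuous_on_def by (metis at_within_Icc_at_left atLeastAtMost_iff order_refl less_imp_le)
  have t1: "((\<lambda>y. v y - v x) \<longlongrightarrow> 0 - v x) (at_left L)" by (intro tendsto_intros vt)
  have t2: "((\<lambda>y. deriv v x * (y - x)) \<longlongrightarrow> deriv v x * (L - x)) (at_left L)" by (intro tendsto_intros)
  have "0 - v x \<le> deriv v x * (L - x)"
    by (rule tendsto_le[OF _ t2 t1 ev]) simp
  then show ?thesis by simp
qed

lemma lam_le_lim:
  fixes lam1 :: "real \<Rightarrow> real" and L :: real
  assumes mono: "mono_on {1<..} lam1" and lim: "(lam1 \<longlongrightarrow> lam_inf) at_top" and L: "L > 1"
  shows "lam1 L \<le> (lam_inf::real)"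
proof (rule tendsto_lowerbound[OF lim])
  show "eventually (\<lambda>i. lam1 L \<le> lam1 i) at_top"
    using eventually_ge_at_top[of L]
    by (rule eventually_mono) (use L in \<open>auto intro: mono_onD[OF mono]\<close>)
qed simp



lemma path_lemma:
  fixes \<zeta> Bp b :: "real \<Rightarrow> real"
  assumes cont: "continuous_on {0..} \<zeta>"
    and eq: "\<And>t. t \<ge> 0 \<Longrightarrow> (\<lambda>s. b (\<zeta> s)) integrable_on {0..t} \<and> \<zeta> t = ystart + integral {0..t} (\<lambda>s. b (\<zeta> s)) + Bp t"
    and drift: "\<And>x. 2 \<le> x \<Longrightarrow> x \<le> Lk \<Longrightarrow> b x \<ge> -m"
    and m: "m \<ge> 0" and z0: "\<zeta> 0 > 2" and Lk: "Lk > 2"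
    and tau: "0 \<le> \<tau>" "\<tau> \<le> \<epsilon>" "\<zeta> \<tau> \<le> 2"
  shows "\<exists>a\<in>{0..\<epsilon>}. \<exists>c\<in>{0..\<epsilon>}. Bp c - Bp a \<le> 2 - min Lk (\<zeta> 0) + m * \<epsilon>"
proof -
  have contI: "continuous_on {p..q} \<zeta>" if "0 \<le> p" for p q
    using that by (intro continuous_on_subset[OF cont]) auto
  define S2 where "S2 = {t\<in>{0..\<tau>}. \<zeta> t \<le> 2}"
  have S2ne: "S2 \<noteq> {}" using tau unfolding S2_def by auto
  have S2c: "closed S2" unfolding S2_def
    by (intro continuous_on_closed_Collect_le contI continuous_on_const) auto
  have S2b: "bdd_below S2" unfolding S2_def by (auto intro: bdd_belowI[of _ 0])
  define tb where "tb = Inf S2"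
  have tbS: "tb \<in> S2" unfolding tb_def by (rule closed_contains_Inf[OF S2ne S2b S2c])
  have tb0: "0 \<le> tb" "tb \<le> \<tau>" "\<zeta> tb \<le> 2" using tbS unfolding S2_def by auto
  have tbmin: "tb \<le> t" if "t \<in> S2" for t unfolding tb_def by (rule cInf_lower[OF that S2b])
  have above2: "\<zeta> t > 2" if "0 \<le> t" "t < tb" for t
  proof (rule ccontr)
    assume "\<not> \<zeta> t > 2"
    then have "t \<in> S2" using that tb0 unfolding S2_def by auto
    then show False using tbmin that by force
  qed
  have ztb: "\<zeta> tb = 2"
  proof (rule ccontr)
    assume "\<zeta> tb \<noteq> 2"
    then have lt: "\<zeta> tb < 2" using tb0 by simp
    obtain t where t: "0 \<le> t" "t \<le> tb" "\<zeta> t = 2"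
      using IVT2'[of \<zeta> tb 2 0] lt z0 tb0 contI[of 0 tb] by auto
    then have "t \<noteq> tb" using lt by auto
    then show False using above2[of t] t by auto
  qed
  have ge2: "\<zeta> t \<ge> 2" if "0 \<le> t" "t \<le> tb" for t
    using above2[of t] that ztb by (cases "t = tb") auto
  obtain a where a: "0 \<le> a" "a \<le> tb" "\<zeta> a \<ge> min Lk (\<zeta> 0)" "\<And>t. a \<le> t \<Longrightarrow> t \<le> tb \<Longrightarrow> \<zeta> t \<le> Lk"
  proof (cases "\<exists>t\<in>{0..tb}. Lk \<le> \<zeta> t")
    case False
    then show ?thesis using that[of 0] tb0 by force
  next
    case True
    define S1 where "S1 = {t\<in>{0..tb}. Lk \<le> \<zeta> t}"
    have S1ne: "S1 \<noteq> {}" using True unfolding S1_def by auto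
    have S1c: "closed S1" unfolding S1_def
      by (intro continuous_on_closed_Collect_le contI continuous_on_const) auto
    have S1b: "bdd_above S1" unfolding S1_def by (auto intro: bdd_aboveI[of _ tb])
    define sa where "sa = Sup S1"
    have saS: "sa \<in> S1" unfolding sa_def by (rule closed_contains_Sup[OF S1ne S1b S1c])
    have samax: "t \<le> sa" if "t \<in> S1" for t unfolding sa_def by (rule cSup_upper[OF that S1b])
    have sa0: "0 \<le> sa" "sa \<le> tb" "Lk \<le> \<zeta> sa" using saS unfolding S1_def by auto
    have after: "\<zeta> t < Lk" if "sa < t" "t \<le> tb" for t
    proof (rule ccontr)
      assume "\<not> \<zeta> t < Lk"
      then have "t \<in> S1" using that sa0 unfolding S1_def by auto
      then show False using samax that by force
    qed
    have zsa: "\<zeta> sa = Lk"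
    proof (rule ccontr)
      assume "\<zeta> sa \<noteq> Lk"
      then have gt: "\<zeta> sa > Lk" using sa0 by simp
      have "sa \<noteq> tb" using gt ztb Lk by auto
      then have satb: "sa < tb" using sa0 by simp
      obtain t where t: "sa \<le> t" "t \<le> tb" "\<zeta> t = Lk"
        using IVT2'[of \<zeta> tb Lk sa] gt ztb Lk satb contI[of sa tb] sa0 by auto
      then have "t \<noteq> sa" using gt by auto
      then show False using after[of t] t by auto
    qed
    show ?thesis
    proof (rule that[of sa])
      show "\<zeta> t \<le> Lk" if "sa \<le> t" "t \<le> tb" for t
        using after[of t] that zsa by (cases "t = sa") auto
    qed (use sa0 zsa in auto)
  qed
  have int_tb: "(\<lambda>s. b (\<zeta> s)) integrable_on {0..tb}" using eq[of tb] tb0 by auto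
  have comb: "integral {0..a} (\<lambda>s. b (\<zeta> s)) + integral {a..tb} (\<lambda>s. b (\<zeta> s)) = integral {0..tb} (\<lambda>s. b (\<zeta> s))"
    by (rule Henstock_Kurzweil_Integration.integral_combine[OF a(1) a(2) int_tb])
  have int_a: "(\<lambda>s. b (\<zeta> s)) integrable_on {a..tb}"
    using integrable_on_subinterval[OF int_tb] a by auto
  have "integral {a..tb} (\<lambda>s. - m) \<le> integral {a..tb} (\<lambda>s. b (\<zeta> s))"
  proof (rule integral_le[OF integrable_const_ivl int_a])
    fix s assume s: "s \<in> {a..tb}"
    show "- m \<le> b (\<zeta> s)" using s a ge2[of s] by (intro drift) auto
  qed
  then have intlow: "- m * (tb - a) \<le> integral {a..tb} (\<lambda>s. b (\<zeta> s))"
    using a by (simp add: content_real mult.commute)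
  have "\<zeta> tb - \<zeta> a = integral {a..tb} (\<lambda>s. b (\<zeta> s)) + (Bp tb - Bp a)"
    using eq[of tb] eq[of a] a tb0 comb by simp
  then have "Bp tb - Bp a = \<zeta> tb - \<zeta> a - integral {a..tb} (\<lambda>s. b (\<zeta> s))" by simp
  also have "\<dots> \<le> 2 - min Lk (\<zeta> 0) + m * (tb - a)" using ztb a(3) intlow by simp
  also have "m * (tb - a) \<le> m * \<epsilon>" using m a tb0 tau by (intro mult_left_mono) auto
  finally have "Bp tb - Bp a \<le> 2 - min Lk (\<zeta> 0) + m * \<epsilon>" by simp
  moreover have "a \<in> {0..\<epsilon>}" "tb \<in> {0..\<epsilon>}" using a tb0 tau by auto
  ultimately show ?thesis by blast
qed



lemma drift_lower:
  fixes \<beta> \<theta> K L x lam :: real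
  assumes W: "admissible_W W" and eig: "dirichlet_eigen W L lam v"
    and vpos: "\<forall>x\<in>{0<..<L}. v x > 0"
    and lamk: "2 * lam \<le> \<beta>^2" and b0: "\<beta> > 0" and th: "\<theta> > 1"
    and K1: "K \<ge> ln ((\<theta>+1)/(\<theta>-1)) / (2*\<beta>)" and K2: "K \<ge> 1/(\<beta>*\<theta>)" and K0: "K > 0"
    and x: "1 < x" "x \<le> L - K"
  shows "deriv v x / v x \<ge> - (\<beta> * \<theta>)"
proof -
  have xL: "x < L" using x K0 by simp
  have vx: "v x > 0" using vpos x xL by auto
  define u where "u = L - x"
  have uK: "u \<ge> K" using x by (simp add: u_def)
  have u0: "u > 0" using uK K0 by simp
  have key: "deriv v x \<ge> - (\<beta> * \<theta>) * v x"
  proof (cases "lam \<ge> 0")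
    case True
    have h: "deriv v x * (exp (\<beta>*u) - exp (-(\<beta>*u))) + \<beta> * (exp (\<beta>*u) + exp (-(\<beta>*u))) * v x \<ge> 0"
      using drift_bound_pos[OF W eig vpos True lamk b0 x(1) xL] by (simp add: u_def)
    define ep where "ep = exp (\<beta>*u)"
    define em where "em = exp (-(\<beta>*u))"
    have ep_em: "ep * em = 1" by (simp add: ep_def em_def exp_minus)
    have em0: "em > 0" by (simp add: em_def)
    have "ln ((\<theta>+1)/(\<theta>-1)) \<le> K * (2*\<beta>)" using K1 b0 by (simp add: pos_divide_le_eq)
    moreover have "K * (2*\<beta>) \<le> u * (2*\<beta>)" using uK b0 by (intro mult_right_mono) auto
    ultimately have "2*\<beta>*u \<ge> ln ((\<theta>+1)/(\<theta>-1))" by (simp add: mult.commute mult.left_commute)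
    then have "exp (2*\<beta>*u) \<ge> (\<theta>+1)/(\<theta>-1)"
      using th by (metis exp_le_cancel_iff exp_ln divide_pos_pos add_pos_pos zero_less_one diff_gt_0_iff_gt less_trans)
    moreover have "exp (2*\<beta>*u) = ep / em" by (simp add: ep_def em_def exp_minus exp_add[symmetric] field_simps)
    ultimately have "(\<theta>+1)/(\<theta>-1) \<le> ep / em" by simp
    then have "(\<theta>+1) * em \<le> (\<theta>-1) * ep" using th em0 by (simp add: field_simps)
    then have psi: "ep + em \<le> \<theta> * (ep - em)" by (simp add: algebra_simps)
    have phi0: "ep - em > 0" using u0 b0 by (simp add: ep_def em_def)
    have "deriv v x * (ep - em) \<ge> - \<beta> * (ep + em) * v x" using h unfolding ep_def em_def by simp
    moreover have "\<beta> * (ep + em) * v x \<le> \<beta> * (\<theta> * (ep - em)) * v x"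
      using psi b0 vx by (intro mult_right_mono mult_left_mono) auto
    ultimately have "deriv v x * (ep - em) \<ge> (- (\<beta> * \<theta>) * v x) * (ep - em)"
      by (simp add: algebra_simps)
    then show ?thesis using phi0 by (metis mult_le_cancel_right_pos)
  next
    case False
    have h: "deriv v x * u + v x \<ge> 0"
      using drift_bound_neg[OF W eig vpos _ x(1) xL] False by (simp add: u_def)
    have "1 \<le> K * (\<beta> * \<theta>)" using K2 b0 th by (simp add: field_simps)
    moreover have "K * (\<beta> * \<theta>) \<le> u * (\<beta> * \<theta>)" using uK b0 th by (intro mult_right_mono) auto
    ultimately have "\<beta> * \<theta> * u \<ge> 1" by (simp add: mult.commute)
    then have "v x \<le> \<beta> * \<theta> * u * v x" using vx by simp
    then have "(deriv v x + \<beta> * \<theta> * v x) * u \<ge> 0" using h by (simp add: algebra_simps)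
    then have "deriv v x + \<beta> * \<theta> * v x \<ge> 0" using u0 by (simp add: zero_le_mult_iff)
    then show ?thesis by simp
  qed
  then show ?thesis using vx by (simp add: field_simps)
qed



lemma sqrt_amgm:
  fixes g q L :: real
  assumes "g > 0" "q > 0" "L > 0"
  shows "sqrt (2*(q*L)) \<le> g*L/8 + 4*q/g"
proof -
  have "(g*L/8 + 4*q/g)^2 - 2*(q*L) = (g*L/8 - 4*q/g)^2"
    using assms by (simp add: power2_eq_square field_simps)
  then have "2*(q*L) \<le> (g*L/8 + 4*q/g)^2" by (metis diff_ge_0_iff_ge zero_le_power2)
  moreover have "g*L/8 + 4*q/g \<ge> 0" using assms by simp
  ultimately show ?thesis by (simp add: real_le_lsqrt)
qed

lemma key_arith:
  fixes S X Y K :: real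
  assumes "S \<le> X/8 + Y" "2 + K/2 + Y \<le> X/8"
  shows "X/4 \<le> (X - 2 - K)/2 - 1 - S"
  using assms by (simp add: field_simps)

lemma main_fixed:
  fixes W :: "real \<Rightarrow> real" and lamf :: "real \<Rightarrow> real" and vf :: "real \<Rightarrow> real \<Rightarrow> real"
    and \<beta> \<theta> K q g c L z :: real and M :: "'a measure"
  assumes W: "admissible_W W"
    and eig: "dirichlet_eigen W L (lamf L) (vf L)"
    and vpos: "\<forall>x\<in>{0<..<L}. vf L x > 0"
    and lamk: "2 * lamf L \<le> \<beta>^2"
    and b0: "\<beta> > 0" and th: "\<theta> > 1"
    and K1: "K \<ge> ln ((\<theta>+1)/(\<theta>-1)) / (2*\<beta>)" and K2: "K \<ge> 1/(\<beta>*\<theta>)" and K0: "K > 0"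
    and q: "q > 0" and g: "g = (1 - c) - \<beta>*\<theta>*q" "g > 0"
    and L1: "L - K > 2" and Lc: "(1-c)*L > 2" and Lg: "g*L/8 \<ge> 2 + K/2 + 4*q/g"
    and z: "z \<in> {0..c*L}"
    and ds: "diffusion_solution M B (\<lambda>y. deriv (vf L) y / vf L y) L (L - z) \<zeta>"
  shows "measure M {\<omega>\<in>space M. (INF t\<in>{0..q*L}. \<zeta> t \<omega>) \<le> 1} \<le> 4 * exp (- (g^2/(32*q)) * L)"
proof -
  have BM: "std_BM M B" using ds unfolding diffusion_solution_def by blast
  have P: "prob_space M" using BM by (rule std_BM_prob)
  interpret prob_space M by fact
  have path: "continuous_on {0..} (\<lambda>t. \<zeta> t \<omega>) \<and>
        (\<forall>t\<ge>0. \<zeta> t \<omega> \<in> {0<..<L} \<and>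
           (\<lambda>s. deriv (vf L) (\<zeta> s \<omega>) / vf L (\<zeta> s \<omega>)) integrable_on {0..t} \<and>
           \<zeta> t \<omega> = (L - z) + integral {0..t} (\<lambda>s. deriv (vf L) (\<zeta> s \<omega>) / vf L (\<zeta> s \<omega>)) + B t \<omega>)"
    if "\<omega> \<in> space M" for \<omega>
    using ds that unfolding diffusion_solution_def by blast
  have L0: "L > 0" using L1 K0 by simp
  define \<epsilon> where "\<epsilon> = q * L"
  have e0: "\<epsilon> > 0" using q L0 by (simp add: \<epsilon>_def)
  define G where "G = g*L - 2 - K"
  have sq: "sqrt (2*\<epsilon>) \<le> g*L/8 + 4*q/g" unfolding \<epsilon>_def by (rule sqrt_amgm[OF g(2) q L0])
  have key: "G/2 - 1 - sqrt (2*\<epsilon>) \<ge> g*L/4"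
    unfolding G_def by (rule key_arith[OF sq Lg])
  have gL: "g*L/4 > 0" using g L0 by simp
  have Gc: "G/2 \<ge> sqrt (2*\<epsilon>) + 1" using key gL by simp
  obtain U where U: "U \<in> sets M"
    "{\<omega>\<in>space M. \<exists>a\<in>{0..\<epsilon>}. \<exists>b\<in>{0..\<epsilon>}. B b \<omega> - B a \<omega> \<le> -G} \<subseteq> U"
    "measure M U \<le> 4 * exp (-((G/2 - 1 - sqrt (2*\<epsilon>))^2)/(2*\<epsilon>))"
    using bm_osc[OF BM e0 Gc] by blast
  have incl: "{\<omega>\<in>space M. (INF t\<in>{0..q*L}. \<zeta> t \<omega>) \<le> 1} \<subseteq> U"
  proof
    fix \<omega> assume "\<omega> \<in> {\<omega>\<in>space M. (INF t\<in>{0..q*L}. \<zeta> t \<omega>) \<le> 1}"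
    then have w: "\<omega> \<in> space M" and inf1: "(INF t\<in>{0..\<epsilon>}. \<zeta> t \<omega>) \<le> 1" by (auto simp: \<epsilon>_def)
    note pw = path[OF w]
    have pcont: "continuous_on {0..} (\<lambda>t. \<zeta> t \<omega>)" using pw by blast
    have peq: "(\<lambda>s. deriv (vf L) (\<zeta> s \<omega>) / vf L (\<zeta> s \<omega>)) integrable_on {0..t} \<and>
           \<zeta> t \<omega> = (L - z) + integral {0..t} (\<lambda>s. deriv (vf L) (\<zeta> s \<omega>) / vf L (\<zeta> s \<omega>)) + B t \<omega>"
      if "0 \<le> t" for t
      using pw that by blast
    have ce: "continuous_on {0..\<epsilon>} (\<lambda>t. \<zeta> t \<omega>)"
      by (rule continuous_on_subset[OF pcont]) auto
    obtain t0 where t0: "t0 \<in> {0..\<epsilon>}" "\<And>t. t \<in> {0..\<epsilon>} \<Longrightarrow> \<zeta> t0 \<omega> \<le> \<zeta> t \<omega>"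
    proof -
      have "{0..\<epsilon>} \<noteq> {}" using e0 by simp
      from continuous_attains_inf[OF compact_Icc this ce] show ?thesis using that by blast
    qed
    have "\<zeta> t0 \<omega> \<le> (INF t\<in>{0..\<epsilon>}. \<zeta> t \<omega>)"
    proof (rule cINF_greatest)
      show "{0..\<epsilon>} \<noteq> {}" using e0 by simp
    qed (rule t0(2))
    then have zt0: "\<zeta> t0 \<omega> \<le> 2" using inf1 by simp
    have B0: "B 0 \<omega> = 0" by (rule std_BM_B0[OF BM w])
    have "\<zeta> 0 \<omega> = (L - z) + integral {0..0} (\<lambda>s. deriv (vf L) (\<zeta> s \<omega>) / vf L (\<zeta> s \<omega>)) + B 0 \<omega>"
      using peq[of 0] by simp
    then have zeta0: "\<zeta> 0 \<omega> = L - z" using B0 by simp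
    have zc: "z \<le> c*L" "0 \<le> z" using z by auto
    have z02: "\<zeta> 0 \<omega> > 2" using zeta0 zc Lc by (simp add: algebra_simps)
    have drift: "- (\<beta>*\<theta>) \<le> deriv (vf L) x / vf L x" if "2 \<le> x" "x \<le> L - K" for x
      by (rule drift_lower[OF W eig vpos lamk b0 th K1 K2 K0]) (use that in auto)
    obtain a c' where ac: "a \<in> {0..\<epsilon>}" "c' \<in> {0..\<epsilon>}"
      "B c' \<omega> - B a \<omega> \<le> 2 - min (L - K) (\<zeta> 0 \<omega>) + (\<beta>*\<theta>) * \<epsilon>"
    proof -
      have "\<exists>a\<in>{0..\<epsilon>}. \<exists>c\<in>{0..\<epsilon>}. B c \<omega> - B a \<omega> \<le> 2 - min (L - K) (\<zeta> 0 \<omega>) + (\<beta>*\<theta>) * \<epsilon>"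
      proof (rule path_lemma[where \<zeta>="\<lambda>t. \<zeta> t \<omega>" and Bp="\<lambda>t. B t \<omega>"
              and b="\<lambda>y. deriv (vf L) y / vf L y" and ystart="L - z" and Lk="L - K" and m="\<beta>*\<theta>" and \<tau>=t0])
        show "continuous_on {0..} (\<lambda>t. \<zeta> t \<omega>)" by (rule pcont)
        show "\<And>t. 0 \<le> t \<Longrightarrow> (\<lambda>s. deriv (vf L) (\<zeta> s \<omega>) / vf L (\<zeta> s \<omega>)) integrable_on {0..t} \<and>
           \<zeta> t \<omega> = L - z + integral {0..t} (\<lambda>s. deriv (vf L) (\<zeta> s \<omega>) / vf L (\<zeta> s \<omega>)) + B t \<omega>"
          by (rule peq)
        show "\<And>x. 2 \<le> x \<Longrightarrow> x \<le> L - K \<Longrightarrow> - (\<beta> * \<theta>) \<le> deriv (vf L) x / vf L x" by (rule drift)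
        show "0 \<le> \<beta> * \<theta>" using b0 th by simp
        show "2 < \<zeta> 0 \<omega>" by (rule z02)
        show "2 < L - K" by (rule L1)
        show "0 \<le> t0" "t0 \<le> \<epsilon>" using t0(1) by auto
        show "\<zeta> t0 \<omega> \<le> 2" by (rule zt0)
      qed
      then show ?thesis using that by blast
    qed
    have mn: "min (L - K) (\<zeta> 0 \<omega>) \<ge> (1-c)*L - K"
      using zeta0 zc K0 by (auto simp: algebra_simps)
    have ac3: "B c' \<omega> - B a \<omega> \<le> 2 - min (L - K) (\<zeta> 0 \<omega>) + (\<beta>*\<theta>) * (q*L)"
      using ac(3) by (simp add: \<epsilon>_def)
    have "B c' \<omega> - B a \<omega> \<le> 2 - ((1-c)*L - K) + (\<beta>*\<theta>) * (q*L)"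
      using ac3 mn by linarith
    also have "\<dots> = -G" unfolding G_def g(1) by (simp add: algebra_simps)
    finally have "B c' \<omega> - B a \<omega> \<le> -G" .
    then have "\<omega> \<in> {\<omega>\<in>space M. \<exists>a\<in>{0..\<epsilon>}. \<exists>b\<in>{0..\<epsilon>}. B b \<omega> - B a \<omega> \<le> -G}"
      using w ac by blast
    then show "\<omega> \<in> U" using U(2) by blast
  qed
  have "measure M {\<omega>\<in>space M. (INF t\<in>{0..q*L}. \<zeta> t \<omega>) \<le> 1} \<le> measure M U"
    by (rule finite_measure_mono[OF incl U(1)])
  also have "\<dots> \<le> 4 * exp (-((G/2 - 1 - sqrt (2*\<epsilon>))^2)/(2*\<epsilon>))" by (rule U(3))
  also have "\<dots> \<le> 4 * exp (- (g^2/(32*q)) * L)"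
  proof -
    have "(g*L/4)^2 \<le> (G/2 - 1 - sqrt (2*\<epsilon>))^2"
      using key gL by (intro power_mono) auto
    then have "(g*L/4)^2/(2*\<epsilon>) \<le> (G/2 - 1 - sqrt (2*\<epsilon>))^2/(2*\<epsilon>)"
      using e0 by (intro divide_right_mono) auto
    moreover have "(g*L/4)^2/(2*\<epsilon>) = (g^2/(32*q)) * L"
      using q L0 unfolding \<epsilon>_def by (simp add: power2_eq_square field_simps)
    ultimately have "-((G/2 - 1 - sqrt (2*\<epsilon>))^2)/(2*\<epsilon>) \<le> - (g^2/(32*q)) * L" by simp
    then show ?thesis by simp
  qed
  finally show ?thesis .
qed



theorem mainTheorem12:
  fixes W :: "real \<Rightarrow> real"
    and lam1 :: "real \<Rightarrow> real" and v1 :: "real \<Rightarrow> real \<Rightarrow> real"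
    and lam_inf \<beta> \<mu> \<delta>1 \<delta>2 c :: real
  assumes W: "admissible_W W"
    and lam1_eig: "\<forall>L>1. dirichlet_eigen W L (lam1 L) (v1 L)"
    and lam1_largest: "\<forall>L>1. \<forall>lam v. dirichlet_eigen W L lam v \<longrightarrow> lam \<le> lam1 L"
    and v1_pos: "\<forall>L>1. \<forall>x\<in>{0<..<L}. v1 L x > 0"
    and lam1_mono: "mono_on {1<..} lam1"
    and lam1_lim: "(lam1 \<longlongrightarrow> lam_inf) at_top"
    and lam_inf_pos: "lam_inf > 0"
    and beta_def: "\<beta> = sqrt (2 * lam_inf)"
    and mu_def: "\<mu> = sqrt (1 + 2 * lam_inf)"
    and mu_beta: "\<mu> > 3 * \<beta>"
    and delta: "\<delta>1 > 0" "\<delta>2 > 0" "(1 - \<delta>1) / \<beta> = 2 * (1 + \<delta>2) / (\<mu> - \<beta>)"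
    and c: "c < \<delta>1"
  shows "\<exists>\<Delta>1>0. \<forall>A::real. A \<ge> 1 \<longrightarrow> (\<exists>c2>0. \<exists>N0::nat. \<forall>N::nat. N \<ge> N0 \<longrightarrow>
     (let L = ln (real N) / (2 * \<beta>) + ln A / (\<mu> - \<beta>);
          \<epsilon> = (1 - \<delta>1) / \<beta> * L
      in \<forall>z\<in>{0..c * L}. \<forall>(M :: 'a measure) B \<zeta>.
           diffusion_solution M B (\<lambda>y. deriv (v1 L) y / v1 L y) L (L - z) \<zeta> \<longrightarrow>
           measure M {\<omega>\<in>space M. (INF t\<in>{0..\<epsilon>}. \<zeta> t \<omega>) \<le> 1} \<le> c2 * real N powr (- \<Delta>1)))"
proof -
  have b0: "\<beta> > 0" using lam_inf_pos beta_def by simp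
  have b2: "\<beta>^2 = 2 * lam_inf" using lam_inf_pos beta_def by simp
  have mb: "\<mu> - \<beta> > 0" using mu_beta b0 by simp
  have "2 * (1 + \<delta>2) / (\<mu> - \<beta>) > 0" using delta(2) mb by simp
  then have "(1 - \<delta>1) / \<beta> > 0" using delta(3) by simp
  then have d1: "1 - \<delta>1 > 0" using b0 by (simp add: zero_less_divide_iff)
  define q where "q = (1 - \<delta>1) / \<beta>"
  have q0: "q > 0" using d1 b0 by (simp add: q_def)
  have bq: "\<beta> * q = 1 - \<delta>1" using b0 by (simp add: q_def)
  define r where "r = (1 - c) / (1 - \<delta>1)"
  have r1: "r > 1" using c d1 by (simp add: r_def)
  define \<theta> where "\<theta> = (1 + r) / 2"
  have th1: "\<theta> > 1" using r1 by (simp add: \<theta>_def)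
  have thr: "\<theta> < r" using r1 by (simp add: \<theta>_def)
  define g where "g = (1 - c) - \<beta> * \<theta> * q"
  have g_eq: "g = (1 - \<delta>1) * (r - \<theta>)"
  proof -
    have e1: "(1 - \<delta>1) * r = 1 - c" using d1 by (simp add: r_def)
    have e2: "\<beta> * \<theta> * q = \<theta> * (1 - \<delta>1)" using bq by (simp add: ac_simps)
    show ?thesis unfolding g_def e2 using e1 by (simp add: algebra_simps)
  qed
  have g0: "g > 0" using g_eq d1 thr by simp
  define K where "K = max 1 (max (ln ((\<theta>+1)/(\<theta>-1)) / (2*\<beta>)) (1/(\<beta>*\<theta>)))"
  have K0: "K > 0" and K1: "K \<ge> ln ((\<theta>+1)/(\<theta>-1)) / (2*\<beta>)" and K2: "K \<ge> 1/(\<beta>*\<theta>)"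
    unfolding K_def by auto
  have c1: "1 - c > 0" using c d1 by simp
  define L0 where "L0 = max (max 2 (K + 3)) (max (3 / (1 - c)) (8 * (2 + K/2 + 4*q/g) / g))"
  define \<kappa> where "\<kappa> = g^2 / (32 * q)"
  have k0: "\<kappa> > 0" using g0 q0 by (simp add: \<kappa>_def)
  define \<Delta> where "\<Delta> = \<kappa> / (2 * \<beta>)"
  have D0: "\<Delta> > 0" using k0 b0 by (simp add: \<Delta>_def)
  define N0 where "N0 = nat \<lceil>exp (2 * \<beta> * L0)\<rceil> + 1"
  show ?thesis
  proof (rule exI[of _ \<Delta>], intro conjI allI impI)
    show "\<Delta> > 0" by (rule D0)
    fix A :: real assume A: "A \<ge> 1"
    show "\<exists>c2>0. \<exists>N0::nat. \<forall>N::nat. N \<ge> N0 \<longrightarrow>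
     (let L = ln (real N) / (2 * \<beta>) + ln A / (\<mu> - \<beta>);
          \<epsilon> = (1 - \<delta>1) / \<beta> * L
      in \<forall>z\<in>{0..c * L}. \<forall>(M :: 'a measure) B \<zeta>.
           diffusion_solution M B (\<lambda>y. deriv (v1 L) y / v1 L y) L (L - z) \<zeta> \<longrightarrow>
           measure M {\<omega>\<in>space M. (INF t\<in>{0..\<epsilon>}. \<zeta> t \<omega>) \<le> 1} \<le> c2 * real N powr (- \<Delta>))"
    proof (rule exI[of _ "4::real"], rule conjI, simp, rule exI[of _ N0], intro allI impI)
      fix N :: nat assume N: "N \<ge> N0"
      define L where "L = ln (real N) / (2 * \<beta>) + ln A / (\<mu> - \<beta>)"
      have Npos: "real N > 0" using N unfolding N0_def by simp
      have "exp (2 * \<beta> * L0) \<le> real N"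
      proof -
        have "exp (2 * \<beta> * L0) \<le> real (nat \<lceil>exp (2 * \<beta> * L0)\<rceil>)" by linarith
        also have "\<dots> \<le> real N" using N unfolding N0_def by simp
        finally show ?thesis .
      qed
      then have "2 * \<beta> * L0 \<le> ln (real N)" using Npos by (metis exp_le_cancel_iff exp_ln)
      then have lnN: "L0 \<le> ln (real N) / (2 * \<beta>)" using b0 by (simp add: field_simps)
      have lnA: "ln A / (\<mu> - \<beta>) \<ge> 0" using A mb by simp
      have LN: "L \<ge> ln (real N) / (2 * \<beta>)" unfolding L_def using lnA by simp
      have LL0: "L \<ge> L0" using lnN LN by simp
      have La: "L \<ge> K + 3" "L \<ge> 2" "L \<ge> 3 / (1 - c)" "L \<ge> 8 * (2 + K/2 + 4*q/g) / g"
        using LL0 unfolding L0_def by auto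
      have L1: "L > 1" using La by simp
      have LK: "L - K > 2" using La by simp
      have Lc: "(1 - c) * L > 2"
      proof -
        have "3 \<le> (1 - c) * L" using La(3) c1 by (simp add: field_simps)
        then show ?thesis by simp
      qed
      have Lg: "g * L / 8 \<ge> 2 + K/2 + 4*q/g"
      proof -
        have "8 * (2 + K/2 + 4*q/g) \<le> g * L" using La(4) g0 by (simp add: field_simps)
        then show ?thesis by simp
      qed
      have lamk: "2 * lam1 L \<le> \<beta>^2"
        using lam_le_lim[OF lam1_mono lam1_lim L1] b2 by simp
      have eigL: "dirichlet_eigen W L (lam1 L) (v1 L)" using lam1_eig L1 by blast
      have vposL: "\<forall>x\<in>{0<..<L}. v1 L x > 0" using v1_pos L1 by blast
      have fin: "exp (- \<kappa> * L) \<le> real N powr (- \<Delta>)"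
      proof -
        have "\<kappa> * (ln (real N) / (2 * \<beta>)) \<le> \<kappa> * L"
          using LN k0 by (intro mult_left_mono) auto
        then have "- \<kappa> * L \<le> - \<kappa> * (ln (real N) / (2 * \<beta>))" by simp
        also have "\<dots> = - \<Delta> * ln (real N)" unfolding \<Delta>_def by simp
        finally have "exp (- \<kappa> * L) \<le> exp (- \<Delta> * ln (real N))" by simp
        also have "\<dots> = real N powr (- \<Delta>)" using Npos by (simp add: powr_def)
        finally show ?thesis .
      qed
      show "let L = ln (real N) / (2 * \<beta>) + ln A / (\<mu> - \<beta>);
          \<epsilon> = (1 - \<delta>1) / \<beta> * L
      in \<forall>z\<in>{0..c * L}. \<forall>(M :: 'a measure) B \<zeta>.
           diffusion_solution M B (\<lambda>y. deriv (v1 L) y / v1 L y) L (L - z) \<zeta> \<longrightarrow>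
           measure M {\<omega>\<in>space M. (INF t\<in>{0..\<epsilon>}. \<zeta> t \<omega>) \<le> 1} \<le> 4 * real N powr (- \<Delta>)"
        unfolding Let_def L_def[symmetric]
      proof (intro ballI allI impI)
        fix z and M :: "'a measure" and B \<zeta>
        assume z: "z \<in> {0..c * L}"
          and ds: "diffusion_solution M B (\<lambda>y. deriv (v1 L) y / v1 L y) L (L - z) \<zeta>"
        have "measure M {\<omega>\<in>space M. (INF t\<in>{0..q*L}. \<zeta> t \<omega>) \<le> 1} \<le> 4 * exp (- (g^2/(32*q)) * L)"
          by (rule main_fixed[where W=W and lamf=lam1 and vf=v1 and L=L, OF W eigL vposL lamk b0 th1 K1 K2 K0 q0 g_def g0 LK Lc Lg z ds])
        also have "\<dots> \<le> 4 * real N powr (- \<Delta>)" using fin unfolding \<kappa>_def by simp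
        finally show "measure M {\<omega>\<in>space M. (INF t\<in>{0..(1 - \<delta>1) / \<beta> * L}. \<zeta> t \<omega>) \<le> 1} \<le> 4 * real N powr (- \<Delta>)"
          unfolding q_def .
      qed
    qed
  qed
qed


end
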